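(* Let $n,m\ge 1$ be integers and consider the shifting-checkers game with $n$ black and $m$ white checkers (defined in the context). Every optimal solution of the game (i.e. every move sequence from the initial configuration to the final configuration using the minimum possible number of moves) uses only the following four kinds of moves: (1) a black checker slides one position to the right into the vacancy; (2) a white checker slides one position to the left into the vacancy; (3) a black checker jumps to the right over an adjacent white checker into the vacancy; (4) a white checker jumps to the left over an adjacent black checker into the vacancy.
   Context: The game: there are $n+m+1$ positions in a row, numbered $1,\dots,n+m+1$. A configuration assigns to each position a black checker, a white checker, or nothing, with exactly one empty position (the vacancy). Writing $b$ for black, $w$ for white and $O$ for the vacancy, the initial configuration is $b^nOw^m$ (blacks at $1,\dots,n$, vacancy at $n+1$, whites at $n+2,\dots,n+m+1$) and the final configuration is $w^mOb^n$. A move is either a slide (a checker at a position adjacent to the vacancy moves into the vacancy) or a jump (a checker at distance two from the vacancy jumps over the checker between them into the vacancy); moves in either direction and over checkers of either colour are permitted. A solution is a finite sequence of moves transforming the initial configuration into the final one; it is optimal if no solution has fewer moves. *)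

theory Defs
  imports Main
begin

datatype cell = Black | White | Empty

type_synonym config = "cell list"

text \<open>Positions 1..n+m+1 of the paper are list indices 0..n+m.\<close>

definition initial :: "nat \<Rightarrow> nat \<Rightarrow> config" where
  "initial n m = replicate n Black @ [Empty] @ replicate m White"

definition final :: "nat \<Rightarrow> nat \<Rightarrow> config" where
  "final n m = replicate m White @ [Empty] @ replicate n Black"

text \<open>A move is a pair (i, j): the checker at position i moves into the vacancy at position j.\<close>
type_synonym move = "nat \<times> nat"

definition dist :: "nat \<Rightarrow> nat \<Rightarrow> nat" where
  "dist i j = (if i \<le> j then j - i else i - j)"

definition valid_move :: "config \<Rightarrow> move \<Rightarrow> bool" where
  "valid_move c mv = (case mv of (i, j) \<Rightarrow>
     i < length c \<and> j < length c \<and> c ! j = Empty \<and> c ! i \<noteq> Empty \<and>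
     (dist i j = 1 \<or> (dist i j = 2 \<and> c ! ((i + j) div 2) \<noteq> Empty)))"

definition apply_move :: "config \<Rightarrow> move \<Rightarrow> config" where
  "apply_move c mv = (case mv of (i, j) \<Rightarrow> c[j := c ! i, i := Empty])"

fun legal_from :: "config \<Rightarrow> move list \<Rightarrow> bool" where
  "legal_from c [] = True"
| "legal_from c (mv # mvs) = (valid_move c mv \<and> legal_from (apply_move c mv) mvs)"

fun run :: "config \<Rightarrow> move list \<Rightarrow> config" where
  "run c [] = c"
| "run c (mv # mvs) = run (apply_move c mv) mvs"

definition solution :: "nat \<Rightarrow> nat \<Rightarrow> move list \<Rightarrow> bool" where
  "solution n m mvs = (legal_from (initial n m) mvs \<and> run (initial n m) mvs = final n m)"

definition optimal_solution :: "nat \<Rightarrow> nat \<Rightarrow> move list \<Rightarrow> bool" where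
  "optimal_solution n m mvs =
     (solution n m mvs \<and> (\<forall>mvs'. solution n m mvs' \<longrightarrow> length mvs \<le> length mvs'))"

definition allowed_kind :: "config \<Rightarrow> move \<Rightarrow> bool" where
  "allowed_kind c mv = (case mv of (i, j) \<Rightarrow>
       (c ! i = Black \<and> j = i + 1)
     \<or> (c ! i = White \<and> i = j + 1)
     \<or> (c ! i = Black \<and> j = i + 2 \<and> c ! (i + 1) = White)
     \<or> (c ! i = White \<and> i = j + 2 \<and> c ! (j + 1) = Black))"

fun all_moves_allowed :: "config \<Rightarrow> move list \<Rightarrow> bool" where
  "all_moves_allowed c [] = True"
| "all_moves_allowed c (mv # mvs) = (allowed_kind c mv \<and> all_moves_allowed (apply_move c mv) mvs)"

end

theory Submission
  imports Defs
begin


definition wt :: "cell \<Rightarrow> int" where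
  "wt x = (case x of Black \<Rightarrow> 1 | White \<Rightarrow> -1 | Empty \<Rightarrow> 0)"

fun wsum :: "config \<Rightarrow> int" where
  "wsum [] = 0" | "wsum (x#xs) = wt x + wsum xs"

fun Qf :: "config \<Rightarrow> int" where
  "Qf [] = 0" | "Qf (x#xs) = Qf xs + wsum xs"

definition cB :: "config \<Rightarrow> int" where
  "cB xs = int (length (filter (\<lambda>x. x = Black) xs))"
definition cW :: "config \<Rightarrow> int" where
  "cW xs = int (length (filter (\<lambda>x. x = White) xs))"

lemma cB_simps[simp]: "cB [] = 0" "cB (x#xs) = (if x = Black then 1 else 0) + cB xs"
  "cB (xs @ ys) = cB xs + cB ys"
  by (auto simp: cB_def)
lemma cW_simps[simp]: "cW [] = 0" "cW (x#xs) = (if x = White then 1 else 0) + cW xs"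
  "cW (xs @ ys) = cW xs + cW ys"
  by (auto simp: cW_def)
lemma cB_rep[simp]: "cB (replicate k x) = (if x = Black then int k else 0)"
  by (induct k) auto
lemma cW_rep[simp]: "cW (replicate k x) = (if x = White then int k else 0)"
  by (induct k) auto

fun Icnt :: "config \<Rightarrow> int" where
  "Icnt [] = 0" | "Icnt (x#xs) = (if x = Black then cW xs else 0) + Icnt xs"

lemma wsum_append[simp]: "wsum (xs @ ys) = wsum xs + wsum ys"
  by (induct xs) auto
lemma Qf_append[simp]: "Qf (xs @ ys) = Qf xs + Qf ys + int (length xs) * wsum ys"
  by (induct xs) (auto simp: algebra_simps)
lemma Icnt_append[simp]: "Icnt (xs @ ys) = Icnt xs + Icnt ys + cB xs * cW ys"
  by (induct xs) (auto simp: algebra_simps)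

lemma split2: "Suc k < length c \<Longrightarrow> c = take k c @ c!k # c!(Suc k) # drop (Suc (Suc k)) c"
  by (metis Cons_nth_drop_Suc Suc_lessD append_take_drop_id)
lemma split3: "Suc (Suc k) < length c \<Longrightarrow>
   c = take k c @ c!k # c!(Suc k) # c!(Suc (Suc k)) # drop (Suc (Suc (Suc k))) c"
  by (metis Cons_nth_drop_Suc Suc_lessD append_take_drop_id)

lemma am1: "apply_move (a @ X # Y # b) (length a, Suc (length a)) = a @ Empty # X # b"
  by (simp add: apply_move_def list_update_append nth_append)
lemma am2: "apply_move (a @ Y # X # b) (Suc (length a), length a) = a @ X # Empty # b"
  by (simp add: apply_move_def list_update_append nth_append)
lemma am3: "apply_move (a @ X # Z # Y # b) (length a, Suc (Suc (length a))) = a @ Empty # Z # X # b"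
  by (simp add: apply_move_def list_update_append nth_append)
lemma am4: "apply_move (a @ Y # Z # X # b) (Suc (Suc (length a)), length a) = a @ X # Z # Empty # b"
  by (simp add: apply_move_def list_update_append nth_append)

lemma decomp:
  assumes "valid_move c (i, j)"
  shows "(\<exists>a b X. X \<noteq> Empty \<and> c = a @ X # Empty # b \<and> i = length a \<and> j = Suc (length a)) \<or>
         (\<exists>a b X. X \<noteq> Empty \<and> c = a @ Empty # X # b \<and> j = length a \<and> i = Suc (length a)) \<or>
         (\<exists>a b X Z. X \<noteq> Empty \<and> Z \<noteq> Empty \<and> c = a @ X # Z # Empty # b \<and> i = length a \<and> j = Suc (Suc (length a))) \<or>
         (\<exists>a b X Z. X \<noteq> Empty \<and> Z \<noteq> Empty \<and> c = a @ Empty # Z # X # b \<and> j = length a \<and> i = Suc (Suc (length a)))"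
proof -
  from assms have v: "i < length c" "j < length c" "c!j = Empty" "c!i \<noteq> Empty"
    and d: "dist i j = 1 \<or> (dist i j = 2 \<and> c ! ((i + j) div 2) \<noteq> Empty)"
    by (auto simp: valid_move_def)
  consider "j = Suc i" | "i = Suc j" | "j = Suc (Suc i)" "c!(Suc i) \<noteq> Empty"
    | "i = Suc (Suc j)" "c!(Suc j) \<noteq> Empty"
  proof -
    assume h1: "j = Suc i \<Longrightarrow> thesis" and h2: "i = Suc j \<Longrightarrow> thesis"
      and h3: "j = Suc (Suc i) \<Longrightarrow> c!(Suc i) \<noteq> Empty \<Longrightarrow> thesis"
      and h4: "i = Suc (Suc j) \<Longrightarrow> c!(Suc j) \<noteq> Empty \<Longrightarrow> thesis"
    show thesis
    proof (cases "dist i j = 1")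
      case True then show ?thesis using h1 h2 by (auto simp: dist_def split: if_splits)
    next
      case False
      then have d2: "dist i j = 2" "c ! ((i + j) div 2) \<noteq> Empty" using d by auto
      show ?thesis
      proof (cases "i \<le> j")
        case True
        then have "j = Suc (Suc i)" using d2 by (auto simp: dist_def)
        moreover then have "(i + j) div 2 = Suc i" by simp
        ultimately show ?thesis using h3 d2 by auto
      next
        case False
        then have "i = Suc (Suc j)" using d2 by (auto simp: dist_def)
        moreover then have "(i + j) div 2 = Suc j" by simp
        ultimately show ?thesis using h4 d2 by auto
      qed
    qed
  qed
  then show ?thesis
  proof cases
    case 1
    have e: "c = take i c @ c!i # c!(Suc i) # drop (Suc (Suc i)) c" by (rule split2) (use v 1 in simp)
    show ?thesis apply (rule disjI1)
      apply (rule exI[of _ "take i c"], rule exI[of _ "drop (Suc (Suc i)) c"], rule exI[of _ "c!i"])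
      using e v 1 by auto
  next
    case 2
    have e: "c = take j c @ c!j # c!(Suc j) # drop (Suc (Suc j)) c" by (rule split2) (use v 2 in simp)
    show ?thesis apply (rule disjI2, rule disjI1)
      apply (rule exI[of _ "take j c"], rule exI[of _ "drop (Suc (Suc j)) c"], rule exI[of _ "c!i"])
      using e v 2 by auto
  next
    case 3
    have e: "c = take i c @ c!i # c!(Suc i) # c!(Suc (Suc i)) # drop (Suc (Suc (Suc i))) c" by (rule split3) (use v 3 in simp)
    show ?thesis apply (rule disjI2, rule disjI2, rule disjI1)
      apply (rule exI[of _ "take i c"], rule exI[of _ "drop (Suc (Suc (Suc i))) c"], rule exI[of _ "c!i"], rule exI[of _ "c!(Suc i)"])
      using e v 3 by auto
  next
    case 4
    have e: "c = take j c @ c!j # c!(Suc j) # c!(Suc (Suc j)) # drop (Suc (Suc (Suc j))) c" by (rule split3) (use v 4 in simp)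
    show ?thesis apply (rule disjI2, rule disjI2, rule disjI2)
      apply (rule exI[of _ "take j c"], rule exI[of _ "drop (Suc (Suc (Suc j))) c"], rule exI[of _ "c!i"], rule exI[of _ "c!(Suc j)"])
      using e v 4 by auto
  qed
qed



definition sl :: "move \<Rightarrow> int" where
  "sl mv = (case mv of (i, j) \<Rightarrow> if dist i j = 1 then 1 else 0)"

definition sc :: "config \<Rightarrow> move \<Rightarrow> int" where
  "sc c mv = 3 * sl mv - 2 * (Icnt (apply_move c mv) - Icnt c) + (Qf (apply_move c mv) - Qf c)"

lemma move_facts:
  assumes "valid_move c (i, j)"
  shows "sc c (i,j) \<le> 4 \<and> (sc c (i,j) = 4 \<longrightarrow> allowed_kind c (i,j)) \<and>
    (allowed_kind c (i,j) \<longrightarrow> Qf (apply_move c (i,j)) + Icnt (apply_move c (i,j)) = Qf c + Icnt c + 1)"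
  using decomp[OF assms]
proof (elim disjE exE conjE)
  fix a b X assume h: "X \<noteq> Empty" "c = a @ X # Empty # b" "i = length a" "j = Suc (length a)"
  then have am: "apply_move c (i,j) = a @ Empty # X # b" using am1 by simp
  show ?thesis unfolding sc_def am using h
    by (cases X) (auto simp: wt_def allowed_kind_def nth_append dist_def sl_def algebra_simps)
next
  fix a b X assume h: "X \<noteq> Empty" "c = a @ Empty # X # b" "j = length a" "i = Suc (length a)"
  then have am: "apply_move c (i,j) = a @ X # Empty # b" using am2 by simp
  show ?thesis unfolding sc_def am using h
    by (cases X) (auto simp: wt_def allowed_kind_def nth_append dist_def sl_def algebra_simps)
next
  fix a b X Z assume h: "X \<noteq> Empty" "Z \<noteq> Empty" "c = a @ X # Z # Empty # b" "i = length a" "j = Suc (Suc (length a))"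
  then have am: "apply_move c (i,j) = a @ Empty # Z # X # b" using am3 by simp
  show ?thesis unfolding sc_def am using h
    by (cases X; cases Z) (auto simp: wt_def allowed_kind_def nth_append dist_def sl_def algebra_simps)
next
  fix a b X Z assume h: "X \<noteq> Empty" "Z \<noteq> Empty" "c = a @ Empty # Z # X # b" "j = length a" "i = Suc (Suc (length a))"
  then have am: "apply_move c (i,j) = a @ X # Z # Empty # b" using am4 by simp
  show ?thesis unfolding sc_def am using h
    by (cases X; cases Z) (auto simp: wt_def allowed_kind_def nth_append dist_def sl_def algebra_simps)
qed



fun scs :: "config \<Rightarrow> move list \<Rightarrow> int" where
  "scs c [] = 0" | "scs c (mv#mvs) = sc c mv + scs (apply_move c mv) mvs"
fun sls :: "move list \<Rightarrow> int" where
  "sls [] = 0" | "sls (mv#mvs) = sl mv + sls mvs"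

lemma scs_eq: "scs c mvs = 3 * sls mvs - 2 * (Icnt (run c mvs) - Icnt c) + (Qf (run c mvs) - Qf c)"
  by (induct mvs arbitrary: c) (auto simp: sc_def algebra_simps)

lemma scs_le: "legal_from c mvs \<Longrightarrow>
   scs c mvs \<le> 4 * int (length mvs) \<and> (scs c mvs = 4 * int (length mvs) \<longrightarrow> all_moves_allowed c mvs)"
proof (induct mvs arbitrary: c)
  case Nil then show ?case by simp
next
  case (Cons mv mvs)
  obtain i j where mv: "mv = (i,j)" by force
  have v: "valid_move c mv" and l: "legal_from (apply_move c mv) mvs" using Cons.prems by auto
  have f: "sc c mv \<le> 4" "sc c mv = 4 \<longrightarrow> allowed_kind c mv" using move_facts[of c i j] v mv by auto
  from Cons.hyps[OF l] f show ?case by auto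
qed

lemma allowed_len: "legal_from c mvs \<Longrightarrow> all_moves_allowed c mvs \<Longrightarrow>
   Qf (run c mvs) + Icnt (run c mvs) = Qf c + Icnt c + int (length mvs)"
proof (induct mvs arbitrary: c)
  case Nil then show ?case by simp
next
  case (Cons mv mvs)
  obtain i j where mv: "mv = (i,j)" by force
  have v: "valid_move c mv" "allowed_kind c mv" using Cons.prems by auto
  then have "Qf (apply_move c mv) + Icnt (apply_move c mv) = Qf c + Icnt c + 1"
    using move_facts[of c i j] mv by auto
  with Cons show ?case by auto
qed

definition one_vac :: "config \<Rightarrow> bool" where
  "one_vac c = (length (filter (\<lambda>x. x = Empty) c) = 1)"
definition rv :: "config \<Rightarrow> nat" where
  "rv c = length (takeWhile (\<lambda>x. x \<noteq> Empty) (rev c))"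
definition SP :: "nat \<Rightarrow> int \<Rightarrow> config \<Rightarrow> bool" where
  "SP m t xs = (\<forall>k. cB (drop k xs) \<ge> 1 \<longrightarrow> cW (drop k xs) < int m \<longrightarrow>
       cB (drop k xs) - cW (drop k xs) + int m - 1 \<le> t)"
definition Inv :: "nat \<Rightarrow> int \<Rightarrow> config \<Rightarrow> bool" where
  "Inv m t c = (one_vac c \<and> t \<ge> 0 \<and> even (t + int m + int (rv c)) \<and> SP m t (filter (\<lambda>x. x \<noteq> Empty) c))"

lemma len_cBW: "Empty \<notin> set xs \<Longrightarrow> int (length xs) = cB xs + cW xs"
proof (induct xs)
  case Nil then show ?case by simp
next
  case (Cons x xs) then show ?case by (cases x) auto
qed

lemma par_step: fixes t m b w :: int
  assumes "even (t + m + b + w)" "b - w + m - 1 \<le> t" shows "b - w + m \<le> t"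
proof -
  have "b - w + m - 1 \<noteq> t" using assms(1) by presburger
  then show ?thesis using assms(2) by linarith
qed

lemma swap_SP:
  assumes X: "X \<noteq> Empty" and Z: "Z \<noteq> Empty" and fb: "Empty \<notin> set fb"
    and ev: "even (t + int m + int (length fb))" and t0: "t \<ge> 0"
    and sp: "SP m t (fa @ X # Z # fb)"
  shows "SP m t (fa @ Z # X # fb)"
  unfolding SP_def
proof (intro allI impI)
  fix k
  assume c1: "1 \<le> cB (drop k (fa @ Z # X # fb))" and c2: "cW (drop k (fa @ Z # X # fb)) < int m"
  have O: "\<And>k. 1 \<le> cB (drop k (fa @ X # Z # fb)) \<Longrightarrow> cW (drop k (fa @ X # Z # fb)) < int m \<Longrightarrow>
       cB (drop k (fa @ X # Z # fb)) - cW (drop k (fa @ X # Z # fb)) + int m - 1 \<le> t"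
    using sp unfolding SP_def by blast
  have lfb: "int (length fb) = cB fb + cW fb" using len_cBW[OF fb] .
  have kc: "k \<le> length fa \<or> k = Suc (length fa) \<or> (\<exists>d. k = Suc (Suc (length fa)) + d)" by presburger
  consider "k \<le> length fa" | "k = Suc (length fa)" | d where "k = Suc (Suc (length fa)) + d" 
    using kc by blast
  then show "cB (drop k (fa @ Z # X # fb)) - cW (drop k (fa @ Z # X # fb)) + int m - 1 \<le> t"
  proof cases
    case 1
    then have "drop k (fa @ Z # X # fb) = drop k fa @ Z # X # fb"
      "drop k (fa @ X # Z # fb) = drop k fa @ X # Z # fb" by auto
    then show ?thesis using O[of k] c1 c2 by auto
  next
    case 3
    then have "drop k (fa @ Z # X # fb) = drop k (fa @ X # Z # fb)"
      by simp
    then show ?thesis using O[of k] c1 c2 by auto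
  next
    case 2
    then have d: "drop k (fa @ Z # X # fb) = X # fb" by simp
    have c1': "1 \<le> cB (X # fb)" and c2': "cW (X # fb) < int m" using c1 c2 by (simp_all only: d)
    have o1: "1 \<le> cB (X # Z # fb) \<Longrightarrow> cW (X # Z # fb) < int m \<Longrightarrow> cB (X # Z # fb) - cW (X # Z # fb) + int m - 1 \<le> t"
      using O[of "length fa"] by simp
    have o2: "1 \<le> cB (Z # fb) \<Longrightarrow> cW (Z # fb) < int m \<Longrightarrow> cB (Z # fb) - cW (Z # fb) + int m - 1 \<le> t"
      using O[of "Suc (length fa)"] by simp
    have o3: "1 \<le> cB fb \<Longrightarrow> cW fb < int m \<Longrightarrow> cB fb - cW fb + int m - 1 \<le> t"
      using O[of "Suc (Suc (length fa))"] by simp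
    have ev2: "even (t + int m + cB fb + cW fb)" using ev lfb by (simp add: add.assoc)
    have nn: "cB fb \<ge> 0" "cW fb \<ge> 0" by (auto simp: cB_def cW_def)
    show ?thesis
    proof (cases X)
      case Empty then show ?thesis using X by simp
    next
      case White
      then show ?thesis using c1' c2' o3 unfolding d by simp
    next
      case Black
      have key: "cB fb - cW fb + int m - 1 \<le> t"
      proof (cases Z)
        case Empty then show ?thesis using Z by simp
      next
        case Black then show ?thesis using o2 c2' nn \<open>X = Black\<close> by simp
      next
        case White
        show ?thesis
        proof (cases "cW fb + 1 < int m")
          case True then show ?thesis using o1 White \<open>X = Black\<close> nn by simp
        next
          case False
          then have cw: "cW fb = int m - 1" using c2' \<open>X = Black\<close> by simp
          show ?thesis
          proof (cases "cB fb \<ge> 1")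
            case True then show ?thesis using o3 cw by simp
          next
            case False then have "cB fb = 0" using nn by simp
            then show ?thesis using cw t0 by simp
          qed
        qed
      qed
      have "cB fb - cW fb + int m \<le> t" using par_step[OF _ key] ev2 by (simp add: algebra_simps)
      then show ?thesis unfolding d using Black by simp
    qed
  qed
qed



lemma rv_lemma: "Empty \<notin> set b \<Longrightarrow> rv (a @ Empty # b) = length b"
  unfolding rv_def by (subst rev_append, simp, subst takeWhile_append2) auto

lemma ov_lemma: "one_vac (a @ Empty # b) \<Longrightarrow> Empty \<notin> set a \<and> Empty \<notin> set b"
  unfolding one_vac_def by (auto simp: filter_empty_conv)

lemma fil_id: "Empty \<notin> set b \<Longrightarrow> filter (\<lambda>x. x \<noteq> Empty) b = b"
  by (auto simp: filter_id_conv)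

lemma SP_mono: "SP m t xs \<Longrightarrow> t \<le> t' \<Longrightarrow> SP m t' xs"
  unfolding SP_def by force

lemma inv_step:
  assumes v: "valid_move c (i, j)" and I: "Inv m t c"
  shows "Inv m (t + sl (i,j)) (apply_move c (i,j))"
  using decomp[OF v]
proof (elim disjE exE conjE)
  fix a b X assume h: "X \<noteq> Empty" "c = a @ X # Empty # b" "i = length a" "j = Suc (length a)"
  then have am: "apply_move c (i,j) = a @ Empty # X # b" using am1 by simp
  have c1: "c = (a @ [X]) @ Empty # b" using h by simp
  have nb: "Empty \<notin> set b" "Empty \<notin> set (a @ [X])" using ov_lemma[of "a @ [X]" b] I c1 by (auto simp: Inv_def)
  have r1: "rv c = length b" unfolding c1 by (rule rv_lemma[OF nb(1)])
  have r2: "rv (apply_move c (i,j)) = Suc (length b)" using rv_lemma[of "X # b" a] nb h am by simp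
  have s: "sl (i,j) = 1" using h by (simp add: sl_def dist_def)
  have f: "filter (\<lambda>x. x \<noteq> Empty) (apply_move c (i,j)) = filter (\<lambda>x. x \<noteq> Empty) c" using am h by simp
  show ?thesis using I unfolding Inv_def f s
    using r1 r2 am h SP_mono[of m t _ "t+1"] by (auto simp: one_vac_def)
next
  fix a b X assume h: "X \<noteq> Empty" "c = a @ Empty # X # b" "j = length a" "i = Suc (length a)"
  then have am: "apply_move c (i,j) = a @ X # Empty # b" using am2 by simp
  have nb: "Empty \<notin> set (X # b)" "Empty \<notin> set a" using ov_lemma[of a "X # b"] I h by (auto simp: Inv_def)
  have r1: "rv c = Suc (length b)" using rv_lemma[OF nb(1)] h by simp
  have r2: "rv (apply_move c (i,j)) = length b" using rv_lemma[of b "a @ [X]"] nb h am by simp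
  have s: "sl (i,j) = 1" using h by (simp add: sl_def dist_def)
  have f: "filter (\<lambda>x. x \<noteq> Empty) (apply_move c (i,j)) = filter (\<lambda>x. x \<noteq> Empty) c" using am h by simp
  show ?thesis using I unfolding Inv_def f s
    using r1 r2 am h SP_mono[of m t _ "t+1"] by (auto simp: one_vac_def)
next
  fix a b X Z assume h: "X \<noteq> Empty" "Z \<noteq> Empty" "c = a @ X # Z # Empty # b" "i = length a" "j = Suc (Suc (length a))"
  then have am: "apply_move c (i,j) = a @ Empty # Z # X # b" using am3 by simp
  have c1: "c = (a @ [X, Z]) @ Empty # b" using h by simp
  have nb: "Empty \<notin> set b" "Empty \<notin> set (a @ [X,Z])" using ov_lemma[of "a @ [X,Z]" b] I c1 by (auto simp: Inv_def)
  have r1: "rv c = length b" unfolding c1 by (rule rv_lemma[OF nb(1)])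
  have r2: "rv (apply_move c (i,j)) = Suc (Suc (length b))" using rv_lemma[of "Z # X # b" a] nb h am by simp
  have s: "sl (i,j) = 0" using h by (simp add: sl_def dist_def)
  define fa where "fa = filter (\<lambda>x. x \<noteq> Empty) a"
  have f1: "filter (\<lambda>x. x \<noteq> Empty) c = fa @ X # Z # b" using h nb fil_id[of b] by (simp add: fa_def)
  have f2: "filter (\<lambda>x. x \<noteq> Empty) (apply_move c (i,j)) = fa @ Z # X # b" using am h nb fil_id[of b] by (simp add: fa_def)
  have ev: "even (t + int m + int (length b))" "t \<ge> 0" "SP m t (fa @ X # Z # b)" using I r1 f1 by (auto simp: Inv_def)
  have "SP m t (fa @ Z # X # b)" by (rule swap_SP[OF h(1,2) nb(1) ev])
  then show ?thesis using I unfolding Inv_def f2 s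
    using r1 r2 am h by (auto simp: one_vac_def)
next
  fix a b X Z assume h: "X \<noteq> Empty" "Z \<noteq> Empty" "c = a @ Empty # Z # X # b" "j = length a" "i = Suc (Suc (length a))"
  then have am: "apply_move c (i,j) = a @ X # Z # Empty # b" using am4 by simp
  have nb: "Empty \<notin> set (Z # X # b)" "Empty \<notin> set a" using ov_lemma[of a "Z # X # b"] I h by (auto simp: Inv_def)
  have r1: "rv c = Suc (Suc (length b))" using rv_lemma[OF nb(1)] h by simp
  have r2: "rv (apply_move c (i,j)) = length b" using rv_lemma[of b "a @ [X, Z]"] nb h am by simp
  have s: "sl (i,j) = 0" using h by (simp add: sl_def dist_def)
  define fa where "fa = filter (\<lambda>x. x \<noteq> Empty) a"
  have nb2: "Empty \<notin> set b" using nb by simp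
  have f1: "filter (\<lambda>x. x \<noteq> Empty) c = fa @ Z # X # b" using h nb2 fil_id[of b] by (simp add: fa_def)
  have f2: "filter (\<lambda>x. x \<noteq> Empty) (apply_move c (i,j)) = fa @ X # Z # b" using am h nb2 fil_id[of b] by (simp add: fa_def)
  have ev0: "even (t + int m + int (length b) + 2)" using I r1 by (auto simp: Inv_def algebra_simps)
  have ev: "even (t + int m + int (length b))" "t \<ge> 0" "SP m t (fa @ Z # X # b)" using I ev0 f1 by (auto simp: Inv_def)
  have "SP m t (fa @ X # Z # b)" by (rule swap_SP[OF h(2,1) nb2 ev])
  then show ?thesis using I unfolding Inv_def f2 s
    using r1 r2 am h by (auto simp: one_vac_def)
qed

lemma inv_run: "legal_from c mvs \<Longrightarrow> Inv m t c \<Longrightarrow> Inv m (t + sls mvs) (run c mvs)"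
proof (induct mvs arbitrary: c t)
  case Nil then show ?case by simp
next
  case (Cons mv mvs)
  obtain i j where mv: "mv = (i,j)" by force
  have v: "valid_move c mv" and l: "legal_from (apply_move c mv) mvs" using Cons.prems by auto
  have "Inv m (t + sl mv) (apply_move c mv)" using inv_step[of c i j m t] v mv Cons.prems by simp
  from Cons.hyps[OF l this] show ?case by (simp add: algebra_simps)
qed

lemma inv_init: "Inv m 0 (initial n m)"
proof -
  have ov: "one_vac (initial n m)" by (simp add: one_vac_def initial_def filter_empty_conv)
  have r: "rv (initial n m) = m" unfolding initial_def using rv_lemma[of "replicate m White" "replicate n Black"] by simp
  have f: "filter (\<lambda>x. x \<noteq> Empty) (initial n m) = replicate n Black @ replicate m White"
    by (simp add: initial_def)
  have sp: "SP m 0 (replicate n Black @ replicate m White)"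
    unfolding SP_def
  proof (intro allI impI)
    fix k assume a1: "1 \<le> cB (drop k (replicate n Black @ replicate m White))"
      and a2: "cW (drop k (replicate n Black @ replicate m White)) < int m"
    show "cB (drop k (replicate n Black @ replicate m White)) - cW (drop k (replicate n Black @ replicate m White)) + int m - 1 \<le> 0"
    proof (cases "k \<le> n")
      case True then show ?thesis using a2 by simp
    next
      case False then show ?thesis using a1 by simp
    qed
  qed
  show ?thesis unfolding Inv_def using ov r f sp by simp
qed

lemma inv_final: assumes "n \<ge> 1" "m \<ge> 1" "Inv m t (final n m)" shows "t \<ge> int n + int m"
proof -
  have r: "rv (final n m) = n" unfolding final_def using rv_lemma[of "replicate n Black" "replicate m White"] by simp
  have f: "filter (\<lambda>x. x \<noteq> Empty) (final n m) = replicate m White @ replicate n Black"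
    by (simp add: final_def)
  have sp: "SP m t (replicate m White @ replicate n Black)" and ev: "even (t + int m + int n)"
    using assms(3) r f by (auto simp: Inv_def)
  have d: "drop m (replicate m White @ replicate n Black) = replicate n Black" by simp
  have "1 \<le> cB (drop m (replicate m White @ replicate n Black)) \<Longrightarrow> cW (drop m (replicate m White @ replicate n Black)) < int m \<Longrightarrow>
     cB (drop m (replicate m White @ replicate n Black)) - cW (drop m (replicate m White @ replicate n Black)) + int m - 1 \<le> t"
    using sp unfolding SP_def by blast
  then have "int n + int m - 1 \<le> t" unfolding d using assms(1,2) by simp
  then show ?thesis using par_step[of t "int m" "int n" 0] ev by (simp add: algebra_simps)
qed



lemma run_append: "run c (xs @ ys) = run (run c xs) ys"
  by (induct xs arbitrary: c) auto
lemma legal_append: "legal_from c (xs @ ys) = (legal_from c xs \<and> legal_from (run c xs) ys)"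
  by (induct xs arbitrary: c) auto
lemma allowed_append: "all_moves_allowed c (xs @ ys) = (all_moves_allowed c xs \<and> all_moves_allowed (run c xs) ys)"
  by (induct xs arbitrary: c) auto

definition areach :: "config \<Rightarrow> config \<Rightarrow> bool" where
  "areach c d = (\<exists>mvs. legal_from c mvs \<and> all_moves_allowed c mvs \<and> run c mvs = d)"

lemma areach_refl: "areach c c"
  unfolding areach_def by (rule exI[of _ "[]"]) simp

lemma areach_trans: "areach c d \<Longrightarrow> areach d e \<Longrightarrow> areach c e"
  unfolding areach_def by (metis legal_append allowed_append run_append)

lemma areach_step: "valid_move c mv \<Longrightarrow> allowed_kind c mv \<Longrightarrow> areach c (apply_move c mv)"
  unfolding areach_def by (rule exI[of _ "[mv]"]) simp

lemma mvBslide: "areach (a @ Black # Empty # b) (a @ Empty # Black # b)"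
proof -
  have "areach (a @ Black # Empty # b) (apply_move (a @ Black # Empty # b) (length a, Suc (length a)))"
    by (rule areach_step) (auto simp: valid_move_def allowed_kind_def nth_append dist_def)
  then show ?thesis by (simp add: am1)
qed
lemma mvWslide: "areach (a @ Empty # White # b) (a @ White # Empty # b)"
proof -
  have "areach (a @ Empty # White # b) (apply_move (a @ Empty # White # b) (Suc (length a), length a))"
    by (rule areach_step) (auto simp: valid_move_def allowed_kind_def nth_append dist_def)
  then show ?thesis by (simp add: am2)
qed
lemma mvBjump: "areach (a @ Black # White # Empty # b) (a @ Empty # White # Black # b)"
proof -
  have "areach (a @ Black # White # Empty # b) (apply_move (a @ Black # White # Empty # b) (length a, Suc (Suc (length a))))"
    by (rule areach_step) (auto simp: valid_move_def allowed_kind_def nth_append dist_def)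
  then show ?thesis by (simp add: am3)
qed
lemma mvWjump: "areach (a @ Empty # Black # White # b) (a @ White # Black # Empty # b)"
proof -
  have "areach (a @ Empty # Black # White # b) (apply_move (a @ Empty # Black # White # b) (Suc (Suc (length a)), length a))"
    by (rule areach_step) (auto simp: valid_move_def allowed_kind_def nth_append dist_def)
  then show ?thesis by (simp add: am4)
qed

definition blk :: "nat \<Rightarrow> cell \<Rightarrow> cell \<Rightarrow> config" where
  "blk k x y = concat (replicate k [x, y])"

lemma blk_0[simp]: "blk 0 x y = []" by (simp add: blk_def)
lemma blk_Suc: "blk (Suc k) x y = x # y # blk k x y" by (simp add: blk_def)
lemma blk_Suc2: "blk (Suc k) x y = blk k x y @ [x, y]"
  by (induct k) (auto simp: blk_Suc)
lemma blk_cons: "x # blk k y x = blk k x y @ [x]"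
  by (induct k) (auto simp: blk_Suc)

lemma sweepR: "areach (u @ Empty # blk k Black White @ w) (u @ blk k White Black @ Empty # w)"
proof (induct k arbitrary: u)
  case 0 then show ?case by (simp add: areach_refl)
next
  case (Suc k)
  have "areach (u @ Empty # blk (Suc k) Black White @ w) (u @ White # Black # Empty # blk k Black White @ w)"
    using mvWjump[of u "blk k Black White @ w"] by (simp add: blk_Suc)
  moreover have "areach ((u @ [White, Black]) @ Empty # blk k Black White @ w) ((u @ [White, Black]) @ blk k White Black @ Empty # w)"
    by (rule Suc)
  ultimately show ?case by (simp add: blk_Suc areach_trans)
qed

lemma sweepL: "areach (u @ blk k Black White @ Empty # w) (u @ Empty # blk k White Black @ w)"
proof (induct k arbitrary: w)
  case 0 then show ?case by (simp add: areach_refl)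
next
  case (Suc k)
  have "areach (u @ blk (Suc k) Black White @ Empty # w) ((u @ blk k Black White) @ Empty # White # Black # w)"
    using mvBjump[of "u @ blk k Black White" w] by (simp add: blk_Suc2)
  moreover have "areach (u @ blk k Black White @ Empty # (White # Black # w)) (u @ Empty # blk k White Black @ (White # Black # w))"
    by (rule Suc)
  ultimately show ?case by (simp add: blk_Suc2 areach_trans)
qed



lemma N3: "blk k x y @ x # zs = x # blk k y x @ zs"
  using blk_cons[of x k y] by (metis append.assoc append_Cons append_Nil)
lemma N1: "replicate n x @ x # zs = x # replicate n x @ zs"
  by (rule replicate_app_Cons_same)

lemmas NS = N1 N3 blk_Suc

lemma chain: "A = P1 \<Longrightarrow> areach P1 P2 \<Longrightarrow> P2 = P3 \<Longrightarrow> areach P3 P4 \<Longrightarrow> P4 = B \<Longrightarrow> areach A B"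
  using areach_trans by blast

abbreviation "rB n \<equiv> replicate n Black"
abbreviation "rW n \<equiv> replicate n White"

definition Lc :: "nat \<Rightarrow> nat \<Rightarrow> nat \<Rightarrow> nat \<Rightarrow> nat \<Rightarrow> config" where
  "Lc x y k z w = rW x @ rB y @ Empty # blk k White Black @ rW z @ rB w"
definition Rc :: "nat \<Rightarrow> nat \<Rightarrow> nat \<Rightarrow> nat \<Rightarrow> nat \<Rightarrow> config" where
  "Rc x y k z w = rW x @ rB y @ blk k White Black @ Empty # rW z @ rB w"

lemma L1: "areach (Lc x (Suc y) k (Suc z) w) (Rc x y (Suc k) z w)"
  apply (rule chain[OF _ mvBslide[of "rW x @ rB y" "blk k White Black @ White # rW z @ rB w"] _
     sweepR[of "rW x @ rB y" "Suc k" "rW z @ rB w"]])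
  by (simp_all add: Lc_def Rc_def NS)

lemma L2: "areach (Lc x (Suc y) k 0 w) (Rc x y k 0 (Suc w))"
  apply (rule chain[OF _ mvBslide[of "rW x @ rB y" "blk k White Black @ rB w"] _
     sweepR[of "rW x @ rB y" "k" "Black # rB w"]])
  by (simp_all add: Lc_def Rc_def NS)

lemma L3: "areach (Lc x 0 (Suc k) (Suc z) w) (Rc (Suc x) 0 (Suc k) z w)"
  apply (rule chain[OF _ mvWslide[of "rW x" "Black # blk k White Black @ White # rW z @ rB w"] _
     sweepR[of "rW (Suc x)" "Suc k" "rW z @ rB w"]])
  by (simp_all add: Lc_def Rc_def NS)

lemma L4: "areach (Lc x 0 (Suc k) 0 w) (Rc (Suc x) 0 k 0 (Suc w))"
  apply (rule chain[OF _ mvWslide[of "rW x" "Black # blk k White Black @ rB w"] _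
     sweepR[of "rW (Suc x)" "k" "Black # rB w"]])
  by (simp_all add: Lc_def Rc_def NS)

lemma L5: "areach (Lc x 0 0 (Suc z) w) (Lc (Suc x) 0 0 z w)"
  apply (rule chain[OF _ mvWslide[of "rW x" "rW z @ rB w"] _ areach_refl])
  by (simp_all add: Lc_def Rc_def NS)

lemma R1: "areach (Rc x (Suc y) k (Suc z) w) (Lc x y (Suc k) z w)"
  apply (rule chain[OF _ mvWslide[of "rW x @ rB (Suc y) @ blk k White Black" "rW z @ rB w"] _
     sweepL[of "rW x @ rB y" "Suc k" "rW z @ rB w"]])
  by (simp_all add: Lc_def Rc_def NS)

lemma R2: "areach (Rc x 0 k (Suc z) w) (Lc (Suc x) 0 k z w)"
  apply (rule chain[OF _ mvWslide[of "rW x @ blk k White Black" "rW z @ rB w"] _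
     sweepL[of "rW (Suc x)" "k" "rW z @ rB w"]])
  by (simp_all add: Lc_def Rc_def NS)

lemma R3a: "areach (Rc x (Suc y) (Suc k) 0 w) (Lc x y (Suc k) 0 (Suc w))"
  apply (rule chain[OF _ mvBslide[of "rW x @ rB (Suc y) @ blk k White Black @ [White]" "rB w"] _
     sweepL[of "rW x @ rB y" "Suc k" "Black # rB w"]])
  by (simp_all add: Lc_def Rc_def NS blk_Suc2)

lemma R3b: "areach (Rc x 0 (Suc k) 0 w) (Lc (Suc x) 0 k 0 (Suc w))"
  apply (rule chain[OF _ mvBslide[of "rW x @ blk k White Black @ [White]" "rB w"] _
     sweepL[of "rW (Suc x)" "k" "Black # rB w"]])
  by (simp_all add: Lc_def Rc_def NS blk_Suc2)



lemma reach_all: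
  "areach (Lc x y k z w) (rW (x+k+z) @ Empty # rB (y+k+w)) \<and>
   areach (Rc x y k z w) (rW (x+k+z) @ Empty # rB (y+k+w))"
proof (induct "2*y+z+k" arbitrary: x y k z w rule: less_induct)
  case less
  have IH: "\<And>x' y' k' z' w'. 2*y'+z'+k' < 2*y+z+k \<Longrightarrow>
     areach (Lc x' y' k' z' w') (rW (x'+k'+z') @ Empty # rB (y'+k'+w')) \<and>
     areach (Rc x' y' k' z' w') (rW (x'+k'+z') @ Empty # rB (y'+k'+w'))"
    using less by blast
  have LP: "areach (Lc x y k z w) (rW (x+k+z) @ Empty # rB (y+k+w))"
  proof (cases y)
    case (Suc y')
    show ?thesis
    proof (cases z)
      case (Suc z')
      have "areach (Rc x y' (Suc k) z' w) (rW (x+Suc k+z') @ Empty # rB (y'+Suc k+w))"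
        using IH[of y' z' "Suc k" x w] \<open>y = Suc y'\<close> Suc by simp
      from areach_trans[OF L1 this] show ?thesis using \<open>y = Suc y'\<close> Suc by simp
    next
      case 0
      have "areach (Rc x y' k 0 (Suc w)) (rW (x+k+0) @ Empty # rB (y'+k+Suc w))"
        using IH[of y' 0 k x "Suc w"] \<open>y = Suc y'\<close> 0 by simp
      from areach_trans[OF L2 this] show ?thesis using \<open>y = Suc y'\<close> 0 by simp
    qed
  next
    case 0
    show ?thesis
    proof (cases k)
      case (Suc k')
      show ?thesis
      proof (cases z)
        case (Suc z')
        have "areach (Rc (Suc x) 0 (Suc k') z' w) (rW (Suc x+Suc k'+z') @ Empty # rB (0+Suc k'+w))"
          using IH[of 0 z' "Suc k'" "Suc x" w] \<open>y = 0\<close> \<open>k = Suc k'\<close> Suc by simp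
        from areach_trans[OF L3 this] show ?thesis using \<open>y = 0\<close> \<open>k = Suc k'\<close> Suc by simp
      next
        case 0
        have "areach (Rc (Suc x) 0 k' 0 (Suc w)) (rW (Suc x+k'+0) @ Empty # rB (0+k'+Suc w))"
          using IH[of 0 0 k' "Suc x" "Suc w"] \<open>y = 0\<close> \<open>k = Suc k'\<close> 0 by simp
        from areach_trans[OF L4 this] show ?thesis using \<open>y = 0\<close> \<open>k = Suc k'\<close> 0 by simp
      qed
    next
      case 0
      show ?thesis
      proof (cases z)
        case (Suc z')
        have "areach (Lc (Suc x) 0 0 z' w) (rW (Suc x+0+z') @ Empty # rB (0+0+w))"
          using IH[of 0 z' 0 "Suc x" w] \<open>y = 0\<close> \<open>k = 0\<close> Suc by simp
        from areach_trans[OF L5 this] show ?thesis using \<open>y = 0\<close> \<open>k = 0\<close> Suc by simp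
      next
        case 0
        show ?thesis using \<open>y = 0\<close> \<open>k = 0\<close> 0 by (simp add: Lc_def areach_refl)
      qed
    qed
  qed
  have RP: "areach (Rc x y k z w) (rW (x+k+z) @ Empty # rB (y+k+w))"
  proof (cases z)
    case (Suc z')
    show ?thesis
    proof (cases y)
      case (Suc y')
      have "areach (Lc x y' (Suc k) z' w) (rW (x+Suc k+z') @ Empty # rB (y'+Suc k+w))"
        using IH[of y' z' "Suc k" x w] \<open>z = Suc z'\<close> Suc by simp
      from areach_trans[OF R1 this] show ?thesis using \<open>z = Suc z'\<close> Suc by simp
    next
      case 0
      have "areach (Lc (Suc x) 0 k z' w) (rW (Suc x+k+z') @ Empty # rB (0+k+w))"
        using IH[of 0 z' k "Suc x" w] \<open>z = Suc z'\<close> 0 by simp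
      from areach_trans[OF R2 this] show ?thesis using \<open>z = Suc z'\<close> 0 by simp
    qed
  next
    case 0
    show ?thesis
    proof (cases k)
      case (Suc k')
      show ?thesis
      proof (cases y)
        case (Suc y')
        have "areach (Lc x y' (Suc k') 0 (Suc w)) (rW (x+Suc k'+0) @ Empty # rB (y'+Suc k'+Suc w))"
          using IH[of y' 0 "Suc k'" x "Suc w"] \<open>z = 0\<close> \<open>k = Suc k'\<close> Suc by simp
        from areach_trans[OF R3a this] show ?thesis using \<open>z = 0\<close> \<open>k = Suc k'\<close> Suc by simp
      next
        case 0
        have "areach (Lc (Suc x) 0 k' 0 (Suc w)) (rW (Suc x+k'+0) @ Empty # rB (0+k'+Suc w))"
          using IH[of 0 0 k' "Suc x" "Suc w"] \<open>z = 0\<close> \<open>k = Suc k'\<close> 0 by simp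
        from areach_trans[OF R3b this] show ?thesis using \<open>z = 0\<close> \<open>k = Suc k'\<close> 0 by simp
      qed
    next
      case 0
      have "Rc x y k z w = Lc x y k z w" using \<open>z = 0\<close> 0 by (simp add: Lc_def Rc_def)
      then show ?thesis using LP by simp
    qed
  qed
  show ?case using LP RP by blast
qed

lemma wsum_rep[simp]: "wsum (replicate k x) = int k * wt x"
  by (induct k) (auto simp: algebra_simps)
lemma Qf_rep: "Qf (rW k) = - Qf (rB k)"
  by (induct k) (auto simp: wt_def)

lemma Icnt_rep[simp]: "Icnt (replicate k x) = 0 \<or> x = Black"
  by (induct k) auto

lemma Icnt_rW: "Icnt (rW k) = 0" by (induct k) auto
lemma Icnt_rB: "Icnt (rB k) = 0" by (induct k) auto

lemma QI_diff: "Qf (final n m) + Icnt (final n m) = Qf (initial n m) + Icnt (initial n m) + int (n*m + n + m)"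
  by (simp add: final_def initial_def Qf_rep Icnt_rW Icnt_rB wt_def algebra_simps)

lemma exists_sol: "\<exists>mvs0. solution n m mvs0 \<and> length mvs0 = n*m + n + m"
proof -
  have "areach (Lc 0 n 0 m 0) (rW (0+0+m) @ Empty # rB (n+0+0))" using reach_all by blast
  moreover have "Lc 0 n 0 m 0 = initial n m" by (simp add: Lc_def initial_def)
  moreover have "rW (0+0+m) @ Empty # rB (n+0+0) = final n m" by (simp add: final_def)
  ultimately have "areach (initial n m) (final n m)" by simp
  then obtain mvs0 where h: "legal_from (initial n m) mvs0" "all_moves_allowed (initial n m) mvs0"
    "run (initial n m) mvs0 = final n m" unfolding areach_def by blast
  have "int (length mvs0) = int (n*m+n+m)" using allowed_len[OF h(1,2)] h(3) QI_diff[of n m] by simp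
  then have "length mvs0 = n*m+n+m" by (simp only: of_nat_eq_iff)
  then show ?thesis using h by (auto simp: solution_def)
qed

lemma arith_aux: fixes u v p a b l :: int
  assumes "u = 3 * v + 4 * p + a + b" "4 * l \<le> 4 * (p + a + b)" "a + b \<le> v"
  shows "4 * l \<le> u" using assms unfolding distrib_left by linarith

theorem lemma1:
  fixes n m :: nat and mvs :: "move list"
  assumes "n \<ge> 1" and "m \<ge> 1"
    and "optimal_solution n m mvs"
  shows "all_moves_allowed (initial n m) mvs"
proof -
  obtain mvs0 where s0: "solution n m mvs0" "length mvs0 = n*m + n + m" using exists_sol by blast
  have sol: "legal_from (initial n m) mvs" "run (initial n m) mvs = final n m"
    and len: "length mvs \<le> n*m + n + m"
    using assms(3) s0 unfolding optimal_solution_def solution_def by force+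
  have "Inv m (0 + sls mvs) (final n m)" using inv_run[OF sol(1) inv_init[of m n]] sol(2) by simp
  then have S: "sls mvs \<ge> int n + int m" using inv_final[OF assms(1,2)] by simp
  have Ii: "Icnt (initial n m) = int n * int m" by (simp add: initial_def Icnt_rW Icnt_rB)
  have If: "Icnt (final n m) = 0" by (simp add: final_def Icnt_rW Icnt_rB)
  have Q: "Qf (final n m) - Qf (initial n m) = 2 * int n * int m + int n + int m"
    using QI_diff[of n m] Ii If by simp
  have "scs (initial n m) mvs = 3 * sls mvs + 2 * (int n * int m) + (2 * int n * int m + int n + int m)"
    using scs_eq[of "initial n m" mvs] sol(2) Ii If Q by simp
  moreover have "4 * int (length mvs) \<le> 4 * (int n * int m + int n + int m)" using len
    by (metis (mono_tags) mult_le_cancel_left_pos of_nat_add of_nat_le_iff of_nat_mult zero_less_numeral)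
  ultimately have ge0: "scs (initial n m) mvs = 3 * sls mvs + 4 * (int n * int m) + int n + int m"
    "4 * int (length mvs) \<le> 4 * (int n * int m + int n + int m)" by (simp_all add: algebra_simps)
  then have ge: "scs (initial n m) mvs \<ge> 4 * int (length mvs)" using arith_aux S by blast
  from scs_le[OF sol(1)] ge show ?thesis by auto
qed

end
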